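(* For a function $F(s,r,\boldsymbol t,\bar{\boldsymbol t})$, the system of six dispersionless Hirota equations (dH1a),(dH1b),(dH2a),(dH2b),(dH3a),(dH3b) is equivalent to the system consisting of (dH1b),(dH2b),(dH3b) together with (dH1c),(dH2c),(dH3c).
   Context: $F=F(s,r,\boldsymbol t,\bar{\boldsymbol t})$ is a smooth function of continuous variables $s,r$ and $\boldsymbol t=(t_1,t_2,\dots)$, $\bar{\boldsymbol t}=(\bar t_1,\bar t_2,\dots)$. $D(z)=\sum_{n\ge1}\frac{z^{-n}}{n}\partial_{t_n}$, $\bar D(z)=\sum_{n\ge1}\frac{z^n}{n}\partial_{\bar t_n}$; identities are understood as formal series in $\lambda^{-1},\mu^{-1}$ (when $D$ appears) and $\lambda,\mu$ (when $\bar D$ appears), for parameters $\lambda\ne\mu$. The equations are: (dH1a) $e^{D(\lambda)D(\mu)F}=\frac{\lambda e^{-\partial_rD(\lambda)F}-\mu e^{-\partial_rD(\mu)F}}{\lambda-\mu}+\frac1{\lambda\mu}e^{(\partial_s+D(\lambda))(\partial_s+D(\mu))F+\partial_r\partial_sF}$; (dH1b) $e^{D(\lambda)D(\mu)F}=\frac{\lambda e^{-\partial_sD(\lambda)F}-\mu e^{-\partial_sD(\mu)F}}{\lambda-\mu}+\frac1{\lambda\mu}e^{(\partial_r+D(\lambda))(\partial_r+D(\mu))F+\partial_r\partial_sF}$; (dH2a) $e^{\bar D(\lambda)\bar D(\mu)F}=\frac{\lambda^{-1}e^{-\partial_r\bar D(\lambda)F}-\mu^{-1}e^{-\partial_r\bar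 D(\mu)F}}{\lambda^{-1}-\mu^{-1}}+\lambda\mu\,e^{(-\partial_s+\bar D(\lambda))(-\partial_s+\bar D(\mu))F-\partial_r\partial_sF}$; (dH2b) $e^{\bar D(\lambda)\bar D(\mu)F}=\frac{\lambda^{-1}e^{\partial_s\bar D(\lambda)F}-\mu^{-1}e^{\partial_s\bar D(\mu)F}}{\lambda^{-1}-\mu^{-1}}+\lambda\mu\,e^{(\partial_r+\bar D(\lambda))(\partial_r+\bar D(\mu))F-\partial_r\partial_sF}$; (dH3a) $e^{D(\lambda)\bar D(\mu)F}=e^{-(\partial_r+\partial_s)\bar D(\mu)F}-\lambda\mu\,e^{-(\partial_rD(\lambda)+\partial_s\bar D(\mu)+\partial_r\partial_s)F}+\lambda\mu\,e^{(-\partial_s+D(\lambda))(-\partial_s+\bar D(\mu))F-(\partial_r+\partial_s)\partial_sF}$; (dH3b) $e^{D(\lambda)\bar D(\mu)F}=1-\frac{\mu}{\lambda}e^{\partial_s(\partial_s+D(\lambda)-\bar D(\mu))F}+\frac{\mu}{\lambda}e^{(\partial_r+D(\lambda))(\partial_r+\bar D(\mu))F}$; (dH1c) $\lambda(e^{-\partial_sD(\lambda)F}-e^{-\partial_rD(\lambda)F})+\lambda^{-1}(e^{\partial_s(\partial_r+\partial_s+D(\lambda))F}-e^{\partial_r(\partial_r+\partial_s+D(\lambda))F})=(\partial_r-\partial_s)\partial_{t_1}F$; (dH2c) $\lambda^{-1}(e^{\partial_s\bar D(\lambda)F}-e^{-\partial_r\bar D(\lambda)F})+\lambda(e^{-\partial_s(\partial_r-\partial_s+\bar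 D(\lambda))F}-e^{\partial_r(\partial_r-\partial_s+\bar D(\lambda))F})=(\partial_r+\partial_s)\partial_{\bar t_1}F$; (dH3c) $(\partial_r+\partial_s)\partial_{\bar t_1}F=e^{-\partial_r\partial_sF}(\partial_r-\partial_s)\partial_{t_1}F$. *)

theory Defs
  imports "HOL-Analysis.Analysis" "HOL-Computational_Algebra.Formal_Laurent_Series"
begin

text \<open>Independent variables: s, r, t_(n+1) (constructor Vt n), tbar_(n+1) (constructor Vtb n).
  So Vt 0 is t_1 and Vtb 0 is tbar_1.  A point is an assignment of reals to all variables.\<close>
datatype var = Vs | Vr | Vt nat | Vtb nat

type_synonym pt = "var \<Rightarrow> real"

definition pd :: "var \<Rightarrow> (pt \<Rightarrow> real) \<Rightarrow> pt \<Rightarrow> real" where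
  "pd v G p = deriv (\<lambda>h. G (p(v := p v + h))) 0"

fun ipd :: "var list \<Rightarrow> (pt \<Rightarrow> real) \<Rightarrow> pt \<Rightarrow> real" where
  "ipd [] G = G"
| "ipd (v # vs) G = pd v (ipd vs G)"

definition smooth_F :: "(pt \<Rightarrow> real) \<Rightarrow> bool" where
  "smooth_F F \<longleftrightarrow>
     (\<forall>vs v p. (\<lambda>h. ipd vs F (p(v := p v + h))) differentiable (at 0)) \<and>
     (\<forall>vs p V. finite V \<longrightarrow> continuous_on {q. \<forall>v. v \<notin> V \<longrightarrow> q v = p v} (ipd vs F))"

definition hess :: "(pt \<Rightarrow> real) \<Rightarrow> pt \<Rightarrow> var \<Rightarrow> var \<Rightarrow> real" where
  "hess F p v w = pd v (pd w F) p"

text \<open>Two-variable formal series are represented in the field  real fls fls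
  (Laurent series in an outer variable X whose coefficients are Laurent series in an inner
  variable Y).  In each equation, the first spectral parameter lambda corresponds to the outer
  variable and mu to the inner one: X = lambda^-1 (where D(lambda) occurs) or X = lambda
  (where Dbar(lambda) occurs), likewise Y = mu^-1 or Y = mu.\<close>

type_synonym ser = "real fls fls"

definition dser :: "(nat \<Rightarrow> 'a::field) \<Rightarrow> 'a fls" where
  "dser c = fps_to_fls (Abs_fps (\<lambda>n. if n = 0 then 0 else c (n - 1) / of_nat n))"

definition expN :: "'a::field_char_0 fls \<Rightarrow> 'a fls" where
  "expN f = fps_to_fls (Abs_fps (\<lambda>n. \<Sum>k\<le>n. fls_nth (f ^ k) (int n) / of_nat (fact k)))"

text \<open>exp of a one-variable power series:  e^(c + g) = e^c e^g.\<close>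
definition exp1 :: "real fls \<Rightarrow> real fls" where
  "exp1 f = fls_const (exp (fls_nth f 0)) * expN (f - fls_const (fls_nth f 0))"

text \<open>exp of a two-variable power series (no negative powers of X or Y).\<close>
definition ex :: "ser \<Rightarrow> ser" where
  "ex u = fls_const (exp1 (fls_nth u 0)) * expN (u - fls_const (fls_nth u 0))"

definition c2 :: "real \<Rightarrow> ser" where
  "c2 a = fls_const (fls_const a)"

definition Xo :: ser where "Xo = fls_X"
definition Yi :: ser where "Yi = fls_const fls_X"

text \<open>Outer series  sum_m X^m/m * H v (tv (m-1)),  i.e.  d_v D(lambda) F  (or Dbar).\<close>
definition Ox :: "(var \<Rightarrow> var \<Rightarrow> real) \<Rightarrow> (nat \<Rightarrow> var) \<Rightarrow> var \<Rightarrow> ser" where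
  "Ox H tv v = dser (\<lambda>i. fls_const (H v (tv i)))"

text \<open>Inner series  sum_n Y^n/n * H v (tv (n-1)),  i.e.  d_v D(mu) F  (or Dbar).\<close>
definition Iy :: "(var \<Rightarrow> var \<Rightarrow> real) \<Rightarrow> (nat \<Rightarrow> var) \<Rightarrow> var \<Rightarrow> ser" where
  "Iy H tv v = fls_const (dser (\<lambda>j. H v (tv j)))"

text \<open>sum_{m,n} X^m Y^n/(m n) * H (tv1 (m-1)) (tv2 (n-1)),  i.e.  D(lambda) D(mu) F.\<close>
definition OI :: "(var \<Rightarrow> var \<Rightarrow> real) \<Rightarrow> (nat \<Rightarrow> var) \<Rightarrow> (nat \<Rightarrow> var) \<Rightarrow> ser" where
  "OI H tv1 tv2 = dser (\<lambda>i. dser (\<lambda>j. H (tv1 i) (tv2 j)))"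

text \<open>dH1a/dH1b: X = lambda^-1, Y = mu^-1.\<close>
definition dH1a :: "(var \<Rightarrow> var \<Rightarrow> real) \<Rightarrow> bool" where
  "dH1a H \<longleftrightarrow>
    (let l = inverse Xo; m = inverse Yi in
     ex (OI H Vt Vt) =
       (l * ex (- Ox H Vt Vr) - m * ex (- Iy H Vt Vr)) / (l - m)
       + inverse (l * m) *
         ex (c2 (H Vs Vs) + Iy H Vt Vs + Ox H Vt Vs + OI H Vt Vt + c2 (H Vr Vs)))"

definition dH1b :: "(var \<Rightarrow> var \<Rightarrow> real) \<Rightarrow> bool" where
  "dH1b H \<longleftrightarrow>
    (let l = inverse Xo; m = inverse Yi in
     ex (OI H Vt Vt) =
       (l * ex (- Ox H Vt Vs) - m * ex (- Iy H Vt Vs)) / (l - m)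
       + inverse (l * m) *
         ex (c2 (H Vr Vr) + Iy H Vt Vr + Ox H Vt Vr + OI H Vt Vt + c2 (H Vr Vs)))"

text \<open>dH2a/dH2b: X = lambda, Y = mu.\<close>
definition dH2a :: "(var \<Rightarrow> var \<Rightarrow> real) \<Rightarrow> bool" where
  "dH2a H \<longleftrightarrow>
    (let l = Xo; m = Yi in
     ex (OI H Vtb Vtb) =
       (inverse l * ex (- Ox H Vtb Vr) - inverse m * ex (- Iy H Vtb Vr))
         / (inverse l - inverse m)
       + (l * m) *
         ex (c2 (H Vs Vs) - Iy H Vtb Vs - Ox H Vtb Vs + OI H Vtb Vtb - c2 (H Vr Vs)))"

definition dH2b :: "(var \<Rightarrow> var \<Rightarrow> real) \<Rightarrow> bool" where
  "dH2b H \<longleftrightarrow>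
    (let l = Xo; m = Yi in
     ex (OI H Vtb Vtb) =
       (inverse l * ex (Ox H Vtb Vs) - inverse m * ex (Iy H Vtb Vs))
         / (inverse l - inverse m)
       + (l * m) *
         ex (c2 (H Vr Vr) + Iy H Vtb Vr + Ox H Vtb Vr + OI H Vtb Vtb - c2 (H Vr Vs)))"

text \<open>dH3a/dH3b: X = lambda^-1, Y = mu.\<close>
definition dH3a :: "(var \<Rightarrow> var \<Rightarrow> real) \<Rightarrow> bool" where
  "dH3a H \<longleftrightarrow>
    (let l = inverse Xo; m = Yi in
     ex (OI H Vt Vtb) =
       ex (- (Iy H Vtb Vr + Iy H Vtb Vs))
       - (l * m) * ex (- (Ox H Vt Vr + Iy H Vtb Vs + c2 (H Vr Vs)))
       + (l * m) *
         ex (c2 (H Vs Vs) - Iy H Vtb Vs - Ox H Vt Vs + OI H Vt Vtb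
             - (c2 (H Vr Vs) + c2 (H Vs Vs))))"

definition dH3b :: "(var \<Rightarrow> var \<Rightarrow> real) \<Rightarrow> bool" where
  "dH3b H \<longleftrightarrow>
    (let l = inverse Xo; m = Yi in
     ex (OI H Vt Vtb) =
       1 - (m / l) * ex (c2 (H Vs Vs) + Ox H Vt Vs - Iy H Vtb Vs)
       + (m / l) * ex (c2 (H Vr Vr) + Iy H Vtb Vr + Ox H Vt Vr + OI H Vt Vtb))"

text \<open>dH1c: X = lambda^-1 (only the outer variable occurs).\<close>
definition dH1c :: "(var \<Rightarrow> var \<Rightarrow> real) \<Rightarrow> bool" where
  "dH1c H \<longleftrightarrow>
    (let l = inverse Xo in
     l * (ex (- Ox H Vt Vs) - ex (- Ox H Vt Vr))
     + inverse l * (ex (c2 (H Vs Vr) + c2 (H Vs Vs) + Ox H Vt Vs)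
                    - ex (c2 (H Vr Vr) + c2 (H Vr Vs) + Ox H Vt Vr))
     = c2 (H Vr (Vt 0) - H Vs (Vt 0)))"

text \<open>dH2c: X = lambda.\<close>
definition dH2c :: "(var \<Rightarrow> var \<Rightarrow> real) \<Rightarrow> bool" where
  "dH2c H \<longleftrightarrow>
    (let l = Xo in
     inverse l * (ex (Ox H Vtb Vs) - ex (- Ox H Vtb Vr))
     + l * (ex (- (c2 (H Vs Vr) - c2 (H Vs Vs) + Ox H Vtb Vs))
            - ex (c2 (H Vr Vr) - c2 (H Vr Vs) + Ox H Vtb Vr))
     = c2 (H Vr (Vtb 0) + H Vs (Vtb 0)))"

definition dH3c :: "(var \<Rightarrow> var \<Rightarrow> real) \<Rightarrow> bool" where
  "dH3c H \<longleftrightarrow>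
    H Vr (Vtb 0) + H Vs (Vtb 0) = exp (- H Vr Vs) * (H Vr (Vt 0) - H Vs (Vt 0))"

end

theory Submission imports Defs begin
unbundle fps_syntax

lemma fls_const_add: "fls_const (a + b) = fls_const a + (fls_const b :: 'a::monoid_add fls)"
  by (intro fls_eqI) simp

lemma fls_const_sum: "fls_const (\<Sum>i\<in>A. f i) = (\<Sum>i\<in>A. fls_const (f i) :: 'a::comm_monoid_add fls)"
  by (induction A rule: infinite_finite_induct) (auto simp: fls_const_add)

lemma fls_const_diff: "fls_const (a - b) = fls_const a - (fls_const b :: 'a::group_add fls)"
  by (intro fls_eqI) simp

lemma fls_const_div: "fls_const (a / b) = fls_const a / (fls_const b :: 'a::division_ring fls)"
  by (simp add: fls_const_divide_const)

lemma fls_const_inv: "fls_const (inverse a) = inverse (fls_const a :: 'a::division_ring fls)"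
  by (simp add: fls_inverse_const)

definition iota :: "real fls \<Rightarrow> ser" where
  "iota f = Abs_fls (\<lambda>n. fls_const (f $$ n))"

lemma iota_nth [simp]: "iota f $$ n = fls_const (f $$ n)"
proof -
  have "\<forall>\<^sub>\<infinity> n::nat. fls_const (f $$ (- int n)) = 0"
    using MOST_fls_neg_nth_eq_0[of f] by (rule eventually_mono) simp
  thus ?thesis unfolding iota_def by simp
qed

lemma iota_add [simp]: "iota (f + g) = iota f + iota g"
  by (intro fls_eqI) (simp add: fls_const_add)
lemma iota_uminus [simp]: "iota (- f) = - iota f"
  by (intro fls_eqI) simp
lemma iota_diff [simp]: "iota (f - g) = iota f - iota g"
  by (intro fls_eqI) (simp add: fls_const_diff)
lemma iota_0 [simp]: "iota 0 = 0"
  by (intro fls_eqI) simp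
lemma iota_1 [simp]: "iota 1 = 1"
  by (intro fls_eqI) simp
lemma iota_const [simp]: "iota (fls_const c) = fls_const (fls_const c)"
  by (intro fls_eqI) simp
lemma iota_X [simp]: "iota fls_X = fls_X"
  by (intro fls_eqI) simp
lemma iota_eq_0_iff [simp]: "iota f = 0 \<longleftrightarrow> f = 0"
  by (auto simp: fls_eq_iff)
lemma iota_inj: "iota f = iota g \<longleftrightarrow> f = g"
  by (auto simp: fls_eq_iff)

lemma iota_subdegree [simp]: "fls_subdegree (iota f) = fls_subdegree f"
proof (cases "f = 0")
  case False
  show ?thesis
    by (rule fls_subdegree_eqI) (use False in auto)
qed simp

lemma iota_mult [simp]: "iota (f * g) = iota f * iota g"
  apply (rule fls_eqI)
  apply (simp add: fls_times_nth(2)[of "iota f"] fls_times_nth(2)[of f] fls_const_sum)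
  done

lemma iota_inverse [simp]: "iota (inverse f) = inverse (iota f)"
proof (cases "f = 0")
  case False
  hence "iota f * iota (inverse f) = 1" by (simp flip: iota_mult)
  thus ?thesis using False by (simp add: field_simps)
qed simp

lemma iota_divide [simp]: "iota (f / g) = iota f / iota g"
  by (simp add: divide_inverse)

lemma iota_power [simp]: "iota (f ^ n) = iota f ^ n"
  by (induction n) auto

lemma iota_fps: "iota (fps_to_fls g) = fps_to_fls (Abs_fps (\<lambda>n. fls_const (fps_nth g n)))"
  by (intro fls_eqI) simp


definition EE :: "'a::field_char_0 fps \<Rightarrow> 'a fps" where "EE g = fps_exp 1 oo g"

lemma expN_fps: "expN (fps_to_fls g) = fps_to_fls (EE g)"
  unfolding expN_def EE_def
  by (simp add: fps_eq_iff fps_compose_nth fps_to_fls_power[symmetric] atMost_atLeast0 divide_inverse mult.commute del: fps_to_fls_power)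

lemma EE_deriv: "fps_nth g 0 = 0 \<Longrightarrow> fps_deriv (EE g) = EE g * fps_deriv g"
  unfolding EE_def by (simp add: fps_compose_deriv)

lemma EE_nth0 [simp]: "fps_nth (EE g) 0 = 1"
  unfolding EE_def by simp

lemma EE_zero [simp]: "EE 0 = 1"
  unfolding EE_def by simp

lemma EE_add:
  assumes g: "fps_nth g 0 = 0" and h: "fps_nth h 0 = 0"
  shows "EE (g + h) = EE g * EE h"
proof -
  define W where "W = EE (-(g+h))"
  have gh: "fps_nth (g+h) 0 = 0" "fps_nth (-(g+h)) 0 = 0" using g h by simp_all
  have d1: "fps_deriv (EE g * EE h * W) = 0"
    unfolding W_def using g h gh
    by (simp add: EE_deriv fps_deriv_mult algebra_simps)
  have e1: "EE g * EE h * W = 1"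
    using d1 fps_deriv_eq_0_iff[of "EE g * EE h * W"] by (simp add: W_def)
  have d2: "fps_deriv (EE (g+h) * W) = 0"
    unfolding W_def using g h gh
    by (simp add: EE_deriv fps_deriv_mult algebra_simps)
  have e2: "EE (g+h) * W = 1"
    using d2 fps_deriv_eq_0_iff[of "EE (g+h) * W"] by (simp add: W_def)
  have "EE g * EE h = EE g * EE h * (EE (g+h) * W)" using e2 by simp
  also have "\<dots> = EE (g+h) * (EE g * EE h * W)" by (simp add: algebra_simps)
  also have "\<dots> = EE (g+h)" using e1 by simp
  finally show ?thesis by simp
qed

definition PS :: "'a::zero fls \<Rightarrow> bool" where "PS f \<longleftrightarrow> f \<in> range fps_to_fls"

lemma PS_fps [simp]: "PS (fps_to_fls g)" by (simp add: PS_def)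
lemma PS_const [simp]: "PS (fls_const c)" by (metis PS_fps fps_const_to_fls)
lemma PS_add [simp]: "PS f \<Longrightarrow> PS g \<Longrightarrow> PS (f + (g::'a::monoid_add fls))"
  by (auto simp: PS_def simp flip: fps_to_fls_plus)
lemma PS_uminus [simp]: "PS f \<Longrightarrow> PS (- (f::'a::group_add fls))"
  by (auto simp: PS_def simp flip: fps_to_fls_uminus)
lemma PS_diff [simp]: "PS f \<Longrightarrow> PS g \<Longrightarrow> PS (f - (g::'a::group_add fls))"
  by (auto simp: PS_def simp flip: fps_to_fls_minus)
lemma PS_mult [simp]: "PS f \<Longrightarrow> PS g \<Longrightarrow> PS (f * (g::'a::{comm_monoid_add,mult_zero} fls))"
  by (auto simp: PS_def simp flip: fls_times_fps_to_fls)
lemma PS_0 [simp]: "PS (0::'a::zero fls)" by (metis PS_const fls_const_0)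
lemma PS_1 [simp]: "PS (1::'a::{zero,one} fls)" by (metis PS_const fls_const_1)
lemma PS_X [simp]: "PS (fls_X::'a::{zero_neq_one} fls)"
  by (metis PS_fps fps_X_to_fls)

lemma exp1_fps: "exp1 (fps_to_fls g) = fls_const (exp (fps_nth g 0)) * fps_to_fls (EE (g - fps_const (fps_nth g 0)))"
  unfolding exp1_def by (simp add: expN_fps flip: fps_const_to_fls fps_to_fls_minus)

lemma exp1_add: "PS f \<Longrightarrow> PS g \<Longrightarrow> exp1 (f + g) = exp1 f * exp1 g"
proof -
  assume "PS f" "PS g"
  then obtain F G where fg: "f = fps_to_fls F" "g = fps_to_fls G" by (auto simp: PS_def)
  have eq: "F + G - fps_const (fps_nth F 0 + fps_nth G 0) = (F - fps_const (fps_nth F 0)) + (G - fps_const (fps_nth G 0))"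
    by (simp add: algebra_simps flip: fps_const_add)
  have "EE (F + G - fps_const (fps_nth F 0 + fps_nth G 0)) = EE (F - fps_const (fps_nth F 0)) * EE (G - fps_const (fps_nth G 0))"
  proof -
    have "EE (F + G - fps_const (fps_nth F 0 + fps_nth G 0)) = EE ((F - fps_const (fps_nth F 0)) + (G - fps_const (fps_nth G 0)))"
      by (simp only: eq)
    also have "\<dots> = EE (F - fps_const (fps_nth F 0)) * EE (G - fps_const (fps_nth G 0))"
      by (rule EE_add) simp_all
    finally show ?thesis .
  qed
  thus ?thesis
    by (simp add: fg exp1_fps exp_add fls_times_fps_to_fls algebra_simps flip: fps_to_fls_plus fls_const_mult_const)
qed


definition P2 :: "ser \<Rightarrow> bool" where "P2 u \<longleftrightarrow> PS u \<and> PS (u $$ 0)"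

lemma ex_fps: "ex (fps_to_fls U) = fls_const (exp1 (fps_nth U 0)) * fps_to_fls (EE (U - fps_const (fps_nth U 0)))"
  unfolding ex_def by (simp add: expN_fps flip: fps_const_to_fls fps_to_fls_minus)

lemma ex_add: "P2 u \<Longrightarrow> P2 v \<Longrightarrow> ex (u + v) = ex u * ex v"
proof -
  assume "P2 u" "P2 v"
  then obtain F G where fg: "u = fps_to_fls F" "v = fps_to_fls G" and
     p: "PS (fps_nth F 0)" "PS (fps_nth G 0)" by (auto simp: P2_def PS_def)
  have eq: "F + G - fps_const (fps_nth F 0 + fps_nth G 0) = (F - fps_const (fps_nth F 0)) + (G - fps_const (fps_nth G 0))"
    by (simp add: algebra_simps flip: fps_const_add)
  have "EE (F + G - fps_const (fps_nth F 0 + fps_nth G 0)) = EE (F - fps_const (fps_nth F 0)) * EE (G - fps_const (fps_nth G 0))"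
  proof -
    have "EE (F + G - fps_const (fps_nth F 0 + fps_nth G 0)) = EE ((F - fps_const (fps_nth F 0)) + (G - fps_const (fps_nth G 0)))"
      by (simp only: eq)
    also have "\<dots> = EE (F - fps_const (fps_nth F 0)) * EE (G - fps_const (fps_nth G 0))"
      by (rule EE_add) simp_all
    finally show ?thesis .
  qed
  thus ?thesis
    by (simp add: fg ex_fps exp1_add[OF p] fls_times_fps_to_fls algebra_simps flip: fps_to_fls_plus fls_const_mult_const)
qed

lemma exp1_0 [simp]: "exp1 0 = 1"
  using exp1_fps[of 0] by simp

lemma ex_0 [simp]: "ex 0 = 1"
  using ex_fps[of 0] by simp

lemma P2_add [simp]: "P2 u \<Longrightarrow> P2 v \<Longrightarrow> P2 (u + v)" by (simp add: P2_def)
lemma P2_uminus [simp]: "P2 u \<Longrightarrow> P2 (- u)" by (simp add: P2_def)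
lemma P2_diff [simp]: "P2 u \<Longrightarrow> P2 v \<Longrightarrow> P2 (u - v)" by (simp add: P2_def)
lemma P2_0 [simp]: "P2 0" by (simp add: P2_def)

lemma ex_uminus: "P2 u \<Longrightarrow> ex (- u) = inverse (ex u)"
proof -
  assume u: "P2 u"
  have "ex u * ex (-u) = 1" using ex_add[OF u P2_uminus[OF u]] by simp
  thus ?thesis by (metis inverse_unique mult.commute)
qed

lemma ex_nz: "P2 u \<Longrightarrow> ex u \<noteq> 0"
proof
  assume u: "P2 u" and "ex u = 0"
  have "ex u * ex (-u) = 1" using ex_add[OF u P2_uminus[OF u]] by simp
  thus False using \<open>ex u = 0\<close> by simp
qed

lemma ex_diff: "P2 u \<Longrightarrow> P2 v \<Longrightarrow> ex (u - v) = ex u * inverse (ex v)"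
  using ex_add[of u "-v"] ex_uminus[of v] by simp

lemma exp1_uminus: "PS d \<Longrightarrow> exp1 (- d) = inverse (exp1 d)"
proof -
  assume u: "PS d"
  have "exp1 d * exp1 (-d) = 1" using exp1_add[OF u PS_uminus[OF u]] by simp
  thus ?thesis by (metis inverse_unique mult.commute)
qed

lemma exp1_nz: "PS d \<Longrightarrow> exp1 d \<noteq> 0"
proof
  assume u: "PS d" and "exp1 d = 0"
  have "exp1 d * exp1 (-d) = 1" using exp1_add[OF u PS_uminus[OF u]] by simp
  thus False using \<open>exp1 d = 0\<close> by simp
qed

lemma PS_exp1 [simp]: "PS (exp1 d)"
  unfolding exp1_def expN_def by simp

lemma PS_iota [simp]: "PS d \<Longrightarrow> PS (iota d)"
  by (auto simp: PS_def iota_fps)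

lemma P2_fls_const [simp]: "PS d \<Longrightarrow> P2 (fls_const d)"
  by (simp add: P2_def)
lemma P2_iota [simp]: "PS d \<Longrightarrow> P2 (iota d)"
  by (simp add: P2_def)
lemma P2_c2 [simp]: "P2 (c2 x)"
  by (simp add: P2_def c2_def)

lemma expN_0 [simp]: "expN 0 = 1"
  using expN_fps[of 0] by simp

lemma exp1_const [simp]: "exp1 (fls_const x) = fls_const (exp x)"
  unfolding exp1_def by simp

lemma ex_const [simp]: "ex (fls_const d) = fls_const (exp1 d)"
  unfolding ex_def by simp

lemma ex_c2 [simp]: "ex (c2 x) = c2 (exp x)"
  unfolding c2_def by simp

lemma iota_expN: "iota (expN f) = expN (iota f)"
  unfolding expN_def
  by (rule fls_eqI) (simp add: fls_const_sum fls_const_div fls_of_nat flip: iota_power)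

lemma ex_iota: "ex (iota d) = iota (exp1 d)"
  unfolding ex_def exp1_def by (simp add: iota_expN flip: iota_const)


definition dd :: "(var \<Rightarrow> var \<Rightarrow> real) \<Rightarrow> (nat \<Rightarrow> var) \<Rightarrow> var \<Rightarrow> real fls" where
  "dd H tv v = dser (\<lambda>i. H v (tv i))"

lemma PS_dser [simp]: "PS (dser c)" unfolding dser_def by simp
lemma dser_nth0 [simp]: "dser c $$ 0 = 0" unfolding dser_def by simp
lemma dser_nth1 [simp]: "dser c $$ 1 = c 0" unfolding dser_def by simp

lemma PS_dd [simp]: "PS (dd H tv v)" by (simp add: dd_def)
lemma dd_nth0 [simp]: "dd H tv v $$ 0 = 0" by (simp add: dd_def)
lemma dd_nth1 [simp]: "dd H tv v $$ 1 = H v (tv 0)" by (simp add: dd_def)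

lemma Ox_iota: "Ox H tv v = iota (dd H tv v)"
  unfolding Ox_def dd_def dser_def
  by (rule fls_eqI) (simp add: fls_const_div fls_of_nat)

lemma Iy_const: "Iy H tv v = fls_const (dd H tv v)"
  unfolding Iy_def dd_def ..

lemma P2_OI [simp]: "P2 (OI H a b)"
  unfolding P2_def OI_def by simp

lemma exp1_nth1: "PS d \<Longrightarrow> d $$ 0 = 0 \<Longrightarrow> exp1 d $$ 1 = d $$ 1"
proof -
  assume "PS d" "d $$ 0 = 0"
  then obtain g where g: "d = fps_to_fls g" "fps_nth g 0 = 0" by (auto simp: PS_def)
  have "fps_nth (EE g) 1 = fps_nth g 1"
    unfolding EE_def by (simp add: fps_compose_nth g)
  thus ?thesis using g by (simp add: exp1_fps)
qed

lemma sep: "iota f = fls_const g \<Longrightarrow> f = fls_const (f $$ 0) \<and> g = fls_const (f $$ 0)"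
proof -
  assume h: "iota f = fls_const g"
  have h2: "\<And>n. fls_const (f $$ n) = (if n = 0 then g else 0)"
    using h by (metis iota_nth fls_const_nth)
  hence b: "fls_const (f $$ 0) = g" by presburger
  from h2
  have a: "\<And>n. n \<noteq> 0 \<Longrightarrow> f $$ n = 0"
    by (metis fls_const_eq_0_iff)
  have "f = fls_const (f $$ 0)"
    by (rule fls_eqI) (simp add: a)
  thus ?thesis using b by simp
qed

lemma one_minus_X_nz: "PS (S::ser) \<Longrightarrow> 1 - fls_X * S \<noteq> 0"
proof
  assume "PS S" "1 - fls_X * S = 0"
  then obtain g where "S = fps_to_fls g" by (auto simp: PS_def)
  hence "(1 - fls_X * S) $$ 0 = 1" by (simp add: fls_X_times_conv_shift)
  thus False using \<open>1 - fls_X * S = 0\<close> by simp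
qed


lemma keyAB0:
  fixes L M pl pm ql qm k1 k2 iL iM ipl ipm iql iqm :: "'a::field"
  assumes "L*iL = 1" "M*iM=1" "pl*ipl=1" "pm*ipm=1" "ql*iql=1" "qm*iqm=1"
  shows "(L * ipl - M * ipm) * (1 - (iL*iM) * (k2*pl*pm))
       - (L * iql - M * iqm) * (1 - (iL*iM) * (k1*ql*qm))
     = ((L*(ipl - iql) + iL*(k2*pl - k1*ql)) - (M*(ipm - iqm) + iM*(k2*pm - k1*qm)))"
  using assms by algebra

lemma keyAB:
  fixes L M pl pm ql qm k1 k2 :: "'a::field"
  assumes nz: "L \<noteq> 0" "M \<noteq> 0" "L \<noteq> M" "pl\<noteq>0" "pm\<noteq>0" "ql\<noteq>0" "qm\<noteq>0"
  shows "(L * inverse pl - M * inverse pm) / (L - M) * (1 - inverse (L*M) * (k2*pl*pm))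
       - (L * inverse ql - M * inverse qm) / (L - M) * (1 - inverse (L*M) * (k1*ql*qm))
     = ((L*(inverse pl - inverse ql) + inverse L*(k2*pl - k1*ql)) - (M*(inverse pm - inverse qm) + inverse M*(k2*pm - k1*qm))) / (L - M)"
proof -
  have e: "(L * inverse pl - M * inverse pm) * (1 - (inverse L*inverse M) * (k2*pl*pm))
       - (L * inverse ql - M * inverse qm) * (1 - (inverse L * inverse M) * (k1*ql*qm))
     = ((L*(inverse pl - inverse ql) + inverse L*(k2*pl - k1*ql)) - (M*(inverse pm - inverse qm) + inverse M*(k2*pm - k1*qm)))"
    by (rule keyAB0) (use nz in simp_all)
  have "(L * inverse pl - M * inverse pm) / (L - M) * (1 - inverse (L*M) * (k2*pl*pm))
       - (L * inverse ql - M * inverse qm) / (L - M) * (1 - inverse (L*M) * (k1*ql*qm))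
     = ((L * inverse pl - M * inverse pm) * (1 - (inverse L*inverse M) * (k2*pl*pm))
       - (L * inverse ql - M * inverse qm) * (1 - (inverse L * inverse M) * (k1*ql*qm))) / (L - M)"
    by (simp add: divide_inverse algebra_simps)
  thus ?thesis using e by simp
qed

lemma sepAB:
  fixes L M E pl pm ql qm k1 k2 :: "'a::field"
  assumes nz: "L \<noteq> 0" "M \<noteq> 0" "L \<noteq> M" "pl\<noteq>0" "pm\<noteq>0" "ql\<noteq>0" "qm\<noteq>0"
    and F1: "1 - inverse (L*M) * (k1*ql*qm) \<noteq> 0"
    and B: "E = (L * inverse pl - M * inverse pm) / (L - M) + inverse (L*M) * (k1*ql*qm*E)"
  shows "E = (L * inverse ql - M * inverse qm) / (L - M) + inverse (L*M) * (k2*pl*pm*E) \<longleftrightarrow>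
    L*(inverse pl - inverse ql) + inverse L*(k2*pl - k1*ql) = M*(inverse pm - inverse qm) + inverse M*(k2*pm - k1*qm)"
proof -
  define R1 R2 P1 P2 where "R1 = (L * inverse pl - M * inverse pm) / (L - M)"
    and "R2 = (L * inverse ql - M * inverse qm) / (L - M)"
    and "P1 = inverse (L*M) * (k1*ql*qm)" and "P2 = inverse (L*M) * (k2*pl*pm)"
  define PL PM where "PL = L*(inverse pl - inverse ql) + inverse L*(k2*pl - k1*ql)"
    and "PM = M*(inverse pm - inverse qm) + inverse M*(k2*pm - k1*qm)"
  have B0: "E = R1 + P1 * E" using B unfolding R1_def P1_def by (simp only: mult.assoc)
  have A: "E = (L * inverse ql - M * inverse qm) / (L - M) + inverse (L*M) * (k2*pl*pm*E) \<longleftrightarrow> E = R2 + P2 * E"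
    unfolding R2_def P2_def by (simp only: mult.assoc)
  have K: "R1 * (1 - P2) - R2 * (1 - P1) = (PL - PM) / (L - M)"
    unfolding R1_def R2_def P1_def P2_def PL_def PM_def by (rule keyAB[OF nz])
  have F1': "1 - P1 \<noteq> 0" using F1 unfolding P1_def .
  have LM: "L - M \<noteq> 0" using nz by simp
  have R1: "R1 = E - P1 * E" by (subst eq_diff_eq) (rule B0[symmetric])
  have "E = R2 + P2 * E \<longleftrightarrow> R2 = E - P2 * E"
    by (subst eq_diff_eq) auto
  also have "\<dots> \<longleftrightarrow> R1 * (1 - P2) - R2 * (1 - P1) = 0"
  proof
    assume "R2 = E - P2 * E"
    thus "R1 * (1 - P2) - R2 * (1 - P1) = 0" using R1 by algebra
  next
    assume "R1 * (1 - P2) - R2 * (1 - P1) = 0"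
    hence "(1 - P1) * (E - P2 * E) = (1 - P1) * R2" using R1 by algebra
    thus "R2 = E - P2 * E" using F1' by simp
  qed
  also have "\<dots> \<longleftrightarrow> PL = PM"
    using K LM by simp
  finally show ?thesis using A unfolding PL_def PM_def by simp
qed


lemma keyC0:
  fixes L m ua ub wa wb er es g iL im iua iub iwa iwb ig :: "'a::field"
  assumes "L*iL = 1" "m*im=1" "ua*iua=1" "ub*iub=1" "wa*iwa=1" "wb*iwb=1" "g*ig=1"
  shows "(iwa*iwb - L*m*ig*iua*iwb) * (1 - (m*iL)*(er*wa*ua)) - (1 - (m*iL)*(es*ub*iwb)) * (1 - L*m*ig*iub*iwb)
    = m*iwb*((im*(iwa - wb) + m*ig*(er*wa - es*iwb)) - (L*ig*(iua - iub) + iL*(er*ua - es*ub)))"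
  using assms by algebra

lemma sepC:
  fixes L m E ua ub wa wb er es g :: "'a::field"
  assumes nz: "L \<noteq> 0" "m \<noteq> 0" "ua\<noteq>0" "ub\<noteq>0" "wa\<noteq>0" "wb\<noteq>0" "g\<noteq>0"
    and F1: "1 - (m/L)*(er*wa*ua) \<noteq> 0"
    and B: "E = 1 - (m/L)*(es*ub*inverse wb) + (m/L)*(er*wa*ua*E)"
  shows "E = inverse wa * inverse wb - L*m*inverse g*inverse ua*inverse wb + L*m*inverse g*inverse ub*inverse wb*E \<longleftrightarrow>
    inverse m*(inverse wa - wb) + m*inverse g*(er*wa - es*inverse wb) = L*inverse g*(inverse ua - inverse ub) + inverse L*(er*ua - es*ub)"
proof -
  define R1 R2 P1 P2 where "R1 = 1 - (m/L)*(es*ub*inverse wb)"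
    and "R2 = inverse wa * inverse wb - L*m*inverse g*inverse ua*inverse wb"
    and "P1 = (m/L)*(er*wa*ua)" and "P2 = L*m*inverse g*inverse ub*inverse wb"
  define PM PL where "PM = inverse m*(inverse wa - wb) + m*inverse g*(er*wa - es*inverse wb)"
    and "PL = L*inverse g*(inverse ua - inverse ub) + inverse L*(er*ua - es*ub)"
  have B0: "E = R1 + P1 * E" using B unfolding R1_def P1_def by (simp only: mult.assoc)
  have A: "E = inverse wa * inverse wb - L*m*inverse g*inverse ua*inverse wb + L*m*inverse g*inverse ub*inverse wb*E \<longleftrightarrow> E = R2 + P2 * E"
    unfolding R2_def P2_def by (simp only: mult.assoc)
  have K: "R2 * (1 - P1) - R1 * (1 - P2) = m * inverse wb * (PM - PL)"
    unfolding R1_def R2_def P1_def P2_def PL_def PM_def divide_inverse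
    by (rule keyC0[where g=g]) (use nz in simp_all)
  have F1': "1 - P1 \<noteq> 0" using F1 unfolding P1_def .
  have R1: "R1 = E - P1 * E" by (subst eq_diff_eq) (rule B0[symmetric])
  have "E = R2 + P2 * E \<longleftrightarrow> R2 = E - P2 * E"
    by (subst eq_diff_eq) auto
  also have "\<dots> \<longleftrightarrow> R2 * (1 - P1) - R1 * (1 - P2) = 0"
  proof
    assume "R2 = E - P2 * E"
    thus "R2 * (1 - P1) - R1 * (1 - P2) = 0" using R1 by algebra
  next
    assume "R2 * (1 - P1) - R1 * (1 - P2) = 0"
    hence "(1 - P1) * (E - P2 * E) = (1 - P1) * R2" using R1 by algebra
    thus "R2 = E - P2 * E" using F1' by simp
  qed
  also have "\<dots> \<longleftrightarrow> PM = PL"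
    using K nz by simp
  finally show ?thesis using A unfolding PL_def PM_def by simp
qed


lemmas exsimps = Ox_iota Iy_const ex_add ex_uminus ex_diff ex_iota

lemma X_ne_constX: "(fls_X::ser) \<noteq> fls_const fls_X"
proof
  assume "(fls_X::ser) = fls_const fls_X"
  hence "(fls_X::ser) $$ 1 = fls_const fls_X $$ 1" by simp
  thus False by simp
qed

lemma LM_ne: "inverse (fls_X::ser) \<noteq> inverse (fls_const fls_X)"
  using X_ne_constX by simp

lemma exp1_iota_nz [simp]: "PS d \<Longrightarrow> iota (exp1 d) \<noteq> 0" using exp1_nz by simp
lemma exp1_const_nz [simp]: "PS d \<Longrightarrow> fls_const (exp1 d) \<noteq> 0" using exp1_nz by simp

lemma c2_mult: "c2 (x * y) = c2 x * c2 y" by (simp add: c2_def)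
lemma c2_nz [simp]: "c2 x = 0 \<longleftrightarrow> x = 0" by (simp add: c2_def)

lemma sep_iff: "iota f = fls_const f \<longleftrightarrow> f = fls_const (f $$ 0)"
proof
  assume "iota f = fls_const f" thus "f = fls_const (f $$ 0)" using sep by blast
next
  assume "f = fls_const (f $$ 0)"
  hence "iota f = iota (fls_const (f $$ 0))" by simp
  also have "\<dots> = fls_const (fls_const (f $$ 0))" by simp
  also have "\<dots> = fls_const f" using \<open>f = _\<close> by simp
  finally show "iota f = fls_const f" .
qed

lemma PS_neg: "PS f \<Longrightarrow> n < 0 \<Longrightarrow> f $$ n = 0"
  by (auto simp: PS_def)

lemma invX_nth0: "(inverse fls_X * (A::real fls)) $$ 0 = A $$ 1"
  by (simp add: fls_inverse_X fls_X_inv_times_conv_shift)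

lemma X_nth0: "PS B \<Longrightarrow> (fls_X * (B::real fls)) $$ 0 = 0"
  by (simp add: fls_X_times_conv_shift PS_neg)

lemma exp1_inv_nth1: "PS d \<Longrightarrow> d $$ 0 = 0 \<Longrightarrow> inverse (exp1 d) $$ 1 = - d $$ 1"
  using exp1_nth1[of "-d"] exp1_uminus[of d] by simp

lemma const_iota_eq: "iota f = c2 k \<longleftrightarrow> f = fls_const k"
  by (metis c2_def iota_const iota_inj)

lemma c2_inverse: "c2 (inverse x) = inverse (c2 x)" by (simp add: c2_def fls_inverse_const)

lemma PS_inv_exp1 [simp]: "PS d \<Longrightarrow> PS (inverse (exp1 d))"
  by (metis PS_exp1 exp1_uminus)

lemma exp1_nth1': "PS d \<Longrightarrow> d $$ 0 = 0 \<Longrightarrow> exp1 d $$ 1 = d $$ 1"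
  by (rule exp1_nth1)

lemma L1abs: "(g::'a::field) \<noteq> 0 \<Longrightarrow> a1 * inverse g * (x1 - y1) + b1 * (r1 * u1 - s1 * v1) = - inverse g * (a1 * (y1 - x1) + b1 * (s1 * g * v1 - r1 * g * u1))"
  by (simp add: field_simps)

lemma L2abs: "a1 * (x1 - w1) + b1 * ig * (r1 * p1 - s1 * y1) = - (a1 * (w1 - x1) + b1 * (s1 * ig * y1 - r1 * ig * p1 :: 'a::comm_ring))"
  by (simp add: algebra_simps)

lemma c2_eq_iff: "c2 a = c2 b \<longleftrightarrow> a = b"
  unfolding c2_def by (metis fls_const_nth)

context
  fixes H :: "var \<Rightarrow> var \<Rightarrow> real"
  assumes sym: "H Vs Vr = H Vr Vs"
begin

definition "aT = dd H Vt Vr"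
definition "bT = dd H Vt Vs"
definition "phi1 = inverse fls_X * (inverse (exp1 bT) - inverse (exp1 aT))
   + fls_X * (fls_const (exp (H Vs Vs) * exp (H Vr Vs)) * exp1 bT - fls_const (exp (H Vr Vr) * exp (H Vr Vs)) * exp1 aT)"

lemma c1b: "dH1b H \<longleftrightarrow> ex (OI H Vt Vt) =
   (inverse fls_X * inverse (iota (exp1 bT)) - inverse (fls_const fls_X) * inverse (fls_const (exp1 bT))) / (inverse fls_X - inverse (fls_const fls_X))
   + inverse (inverse fls_X * inverse (fls_const fls_X)) * (c2 (exp (H Vr Vr) * exp (H Vr Vs)) * iota (exp1 aT) * fls_const (exp1 aT) * ex (OI H Vt Vt))"
  unfolding dH1b_def Let_def Xo_def Yi_def aT_def bT_def
  by (simp add: exsimps del: fls_const_uminus) (simp add: c2_mult mult_ac)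

lemma c1a: "dH1a H \<longleftrightarrow> ex (OI H Vt Vt) =
   (inverse fls_X * inverse (iota (exp1 aT)) - inverse (fls_const fls_X) * inverse (fls_const (exp1 aT))) / (inverse fls_X - inverse (fls_const fls_X))
   + inverse (inverse fls_X * inverse (fls_const fls_X)) * (c2 (exp (H Vs Vs) * exp (H Vr Vs)) * iota (exp1 bT) * fls_const (exp1 bT) * ex (OI H Vt Vt))"
  unfolding dH1a_def Let_def Xo_def Yi_def aT_def bT_def
  by (simp add: exsimps del: fls_const_uminus) (simp add: c2_mult mult_ac)

lemma c1c: "dH1c H \<longleftrightarrow> iota phi1 = c2 (H Vr (Vt 0) - H Vs (Vt 0))"
  unfolding dH1c_def Let_def Xo_def Yi_def aT_def bT_def phi1_def
  by (simp add: exsimps sym del: fls_const_uminus) (simp add: c2_def mult_ac)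

lemma phi1_nth0: "phi1 $$ 0 = H Vr (Vt 0) - H Vs (Vt 0)"
  unfolding phi1_def
  by (simp add: invX_nth0 X_nth0 exp1_inv_nth1 aT_def bT_def)

lemma case1: "dH1b H \<Longrightarrow> (dH1a H \<longleftrightarrow> dH1c H)"
proof -
  assume b: "dH1b H"
  have "dH1a H \<longleftrightarrow>
     inverse fls_X * (inverse (iota (exp1 bT)) - inverse (iota (exp1 aT))) + inverse (inverse fls_X) * (c2 (exp (H Vs Vs) * exp (H Vr Vs)) * iota (exp1 bT) - c2 (exp (H Vr Vr) * exp (H Vr Vs)) * iota (exp1 aT))
   = inverse (fls_const fls_X) * (inverse (fls_const (exp1 bT)) - inverse (fls_const (exp1 aT))) + inverse (inverse (fls_const fls_X)) * (c2 (exp (H Vs Vs) * exp (H Vr Vs)) * fls_const (exp1 bT) - c2 (exp (H Vr Vr) * exp (H Vr Vs)) * fls_const (exp1 aT))"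
    unfolding c1a
  proof (rule sepAB)
    show "1 - inverse (inverse fls_X * inverse (fls_const fls_X)) * (c2 (exp (H Vr Vr) * exp (H Vr Vs)) * iota (exp1 aT) * fls_const (exp1 aT)) \<noteq> 0"
      using one_minus_X_nz[of "fls_const fls_X * (c2 (exp (H Vr Vr) * exp (H Vr Vs)) * iota (exp1 aT) * fls_const (exp1 aT))"]
      by (simp add: mult_ac aT_def c2_def)
    show "ex (OI H Vt Vt) =
   (inverse fls_X * inverse (iota (exp1 bT)) - inverse (fls_const fls_X) * inverse (fls_const (exp1 bT))) / (inverse fls_X - inverse (fls_const fls_X))
   + inverse (inverse fls_X * inverse (fls_const fls_X)) * (c2 (exp (H Vr Vr) * exp (H Vr Vs)) * iota (exp1 aT) * fls_const (exp1 aT) * ex (OI H Vt Vt))"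
      using b c1b by simp
  qed (use LM_ne in \<open>simp_all add: aT_def bT_def exp1_nz\<close>)
  also have "\<dots> \<longleftrightarrow> iota phi1 = fls_const phi1"
    unfolding phi1_def
    by (simp only: iota_add iota_diff iota_mult iota_inverse iota_X iota_const fls_const_add fls_const_diff fls_const_mult_const[symmetric] fls_const_inv c2_def inverse_inverse_eq)
  also have "\<dots> \<longleftrightarrow> phi1 = fls_const (H Vr (Vt 0) - H Vs (Vt 0))"
    by (simp add: sep_iff phi1_nth0)
  also have "\<dots> \<longleftrightarrow> dH1c H"
    by (simp add: c1c const_iota_eq)
  finally show ?thesis .
qed

definition "aB = dd H Vtb Vr"
definition "bB = dd H Vtb Vs"
definition "phi2 = inverse fls_X * (exp1 bB - inverse (exp1 aB))
   + fls_X * (fls_const (exp (H Vs Vs) * inverse (exp (H Vr Vs))) * inverse (exp1 bB) - fls_const (exp (H Vr Vr) * inverse (exp (H Vr Vs))) * exp1 aB)"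

lemma c2b: "dH2b H \<longleftrightarrow> ex (OI H Vtb Vtb) =
   (inverse fls_X * inverse (inverse (iota (exp1 bB))) - inverse (fls_const fls_X) * inverse (inverse (fls_const (exp1 bB)))) / (inverse fls_X - inverse (fls_const fls_X))
   + inverse (inverse fls_X * inverse (fls_const fls_X)) * (c2 (exp (H Vr Vr) * inverse (exp (H Vr Vs))) * iota (exp1 aB) * fls_const (exp1 aB) * ex (OI H Vtb Vtb))"
  unfolding dH2b_def Let_def Xo_def Yi_def aB_def bB_def
  by (simp add: exsimps del: fls_const_uminus) (simp add: c2_mult c2_inverse mult_ac)

lemma c2a: "dH2a H \<longleftrightarrow> ex (OI H Vtb Vtb) =
   (inverse fls_X * inverse (iota (exp1 aB)) - inverse (fls_const fls_X) * inverse (fls_const (exp1 aB))) / (inverse fls_X - inverse (fls_const fls_X))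
   + inverse (inverse fls_X * inverse (fls_const fls_X)) * (c2 (exp (H Vs Vs) * inverse (exp (H Vr Vs))) * inverse (iota (exp1 bB)) * inverse (fls_const (exp1 bB)) * ex (OI H Vtb Vtb))"
  unfolding dH2a_def Let_def Xo_def Yi_def aB_def bB_def
  by (simp add: exsimps del: fls_const_uminus) (simp add: c2_mult c2_inverse mult_ac)

lemma c2c: "dH2c H \<longleftrightarrow> iota phi2 = c2 (H Vr (Vtb 0) + H Vs (Vtb 0))"
  unfolding dH2c_def Let_def Xo_def Yi_def aB_def bB_def phi2_def
  by (simp add: exsimps sym del: fls_const_uminus) (simp add: c2_def mult_ac fls_inverse_const)

lemma phi2_nth0: "phi2 $$ 0 = H Vr (Vtb 0) + H Vs (Vtb 0)"
  unfolding phi2_def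
  by (simp add: invX_nth0 X_nth0 exp1_inv_nth1 exp1_nth1 aB_def bB_def)

lemma case2: "dH2b H \<Longrightarrow> (dH2a H \<longleftrightarrow> dH2c H)"
proof -
  assume b: "dH2b H"
  have "dH2a H \<longleftrightarrow>
     inverse fls_X * (inverse (inverse (iota (exp1 bB))) - inverse (iota (exp1 aB))) + inverse (inverse fls_X) * (c2 (exp (H Vs Vs) * inverse (exp (H Vr Vs))) * inverse (iota (exp1 bB)) - c2 (exp (H Vr Vr) * inverse (exp (H Vr Vs))) * iota (exp1 aB))
   = inverse (fls_const fls_X) * (inverse (inverse (fls_const (exp1 bB))) - inverse (fls_const (exp1 aB))) + inverse (inverse (fls_const fls_X)) * (c2 (exp (H Vs Vs) * inverse (exp (H Vr Vs))) * inverse (fls_const (exp1 bB)) - c2 (exp (H Vr Vr) * inverse (exp (H Vr Vs))) * fls_const (exp1 aB))"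
    unfolding c2a
  proof (rule sepAB)
    show "1 - inverse (inverse fls_X * inverse (fls_const fls_X)) * (c2 (exp (H Vr Vr) * inverse (exp (H Vr Vs))) * iota (exp1 aB) * fls_const (exp1 aB)) \<noteq> 0"
      using one_minus_X_nz[of "fls_const fls_X * (c2 (exp (H Vr Vr) * inverse (exp (H Vr Vs))) * iota (exp1 aB) * fls_const (exp1 aB))"]
      by (simp add: mult_ac aB_def c2_def)
    show "ex (OI H Vtb Vtb) =
   (inverse fls_X * inverse (inverse (iota (exp1 bB))) - inverse (fls_const fls_X) * inverse (inverse (fls_const (exp1 bB)))) / (inverse fls_X - inverse (fls_const fls_X))
   + inverse (inverse fls_X * inverse (fls_const fls_X)) * (c2 (exp (H Vr Vr) * inverse (exp (H Vr Vs))) * iota (exp1 aB) * fls_const (exp1 aB) * ex (OI H Vtb Vtb))"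
      using b c2b by simp
  qed (use LM_ne in \<open>simp_all add: aB_def bB_def exp1_nz\<close>)
  also have "\<dots> \<longleftrightarrow> iota phi2 = fls_const phi2"
    unfolding phi2_def
    by (simp only: iota_add iota_diff iota_mult iota_inverse iota_X iota_const fls_const_add fls_const_diff fls_const_mult_const[symmetric] fls_const_inv c2_def inverse_inverse_eq)
  also have "\<dots> \<longleftrightarrow> phi2 = fls_const (H Vr (Vtb 0) + H Vs (Vtb 0))"
    by (simp add: sep_iff phi2_nth0)
  also have "\<dots> \<longleftrightarrow> dH2c H"
    by (simp add: c2c const_iota_eq)
  finally show ?thesis .
qed

lemma c3b: "dH3b H \<longleftrightarrow> ex (OI H Vt Vtb) = 1 - (fls_const fls_X / inverse fls_X) * (c2 (exp (H Vs Vs)) * iota (exp1 bT) * inverse (fls_const (exp1 bB)))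
    + (fls_const fls_X / inverse fls_X) * (c2 (exp (H Vr Vr)) * fls_const (exp1 aB) * iota (exp1 aT) * ex (OI H Vt Vtb))"
  unfolding dH3b_def Let_def Xo_def Yi_def aB_def bB_def aT_def bT_def
  by (simp add: exsimps del: fls_const_uminus) 

lemma c3a: "dH3a H \<longleftrightarrow> ex (OI H Vt Vtb) = inverse (fls_const (exp1 aB)) * inverse (fls_const (exp1 bB))
    - inverse fls_X * fls_const fls_X * inverse (c2 (exp (H Vr Vs))) * inverse (iota (exp1 aT)) * inverse (fls_const (exp1 bB))
    + inverse fls_X * fls_const fls_X * inverse (c2 (exp (H Vr Vs))) * inverse (iota (exp1 bT)) * inverse (fls_const (exp1 bB)) * ex (OI H Vt Vtb)"
  unfolding dH3a_def Let_def Xo_def Yi_def aB_def bB_def aT_def bT_def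
  by (simp add: exsimps del: fls_const_uminus) (simp add: c2_mult c2_inverse mult_ac)

lemma case3:
  assumes b: "dH3b H" and p1: "phi1 = fls_const (H Vr (Vt 0) - H Vs (Vt 0))"
    and p2: "phi2 = fls_const (H Vr (Vtb 0) + H Vs (Vtb 0))"
  shows "dH3a H \<longleftrightarrow> dH3c H"
proof -
  define g where "g = c2 (exp (H Vr Vs))"
  have gnz: "g \<noteq> 0" unfolding g_def by simp
  define PM where "PM = inverse (fls_const fls_X) * (inverse (fls_const (exp1 aB)) - fls_const (exp1 bB)) + fls_const fls_X * inverse g * (c2 (exp (H Vr Vr)) * fls_const (exp1 aB) - c2 (exp (H Vs Vs)) * inverse (fls_const (exp1 bB)))"
  define PL where "PL = inverse fls_X * inverse g * (inverse (iota (exp1 aT)) - inverse (iota (exp1 bT))) + inverse (inverse fls_X) * (c2 (exp (H Vr Vr)) * iota (exp1 aT) - c2 (exp (H Vs Vs)) * iota (exp1 bT))"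
  have "dH3a H \<longleftrightarrow> PM = PL"
    unfolding c3a g_def[symmetric] PM_def PL_def
  proof (rule sepC)
    show "1 - fls_const fls_X / inverse fls_X * (c2 (exp (H Vr Vr)) * fls_const (exp1 aB) * iota (exp1 aT)) \<noteq> 0"
    proof -
      have e: "fls_const fls_X / inverse (fls_X::ser) * S = fls_X * (fls_const fls_X * S)" for S
        by (simp add: divide_inverse mult_ac)
      show ?thesis
        by (subst e) (rule one_minus_X_nz, simp add: aT_def aB_def c2_def)
    qed
    show "ex (OI H Vt Vtb) = 1 - (fls_const fls_X / inverse fls_X) * (c2 (exp (H Vs Vs)) * iota (exp1 bT) * inverse (fls_const (exp1 bB)))
    + (fls_const fls_X / inverse fls_X) * (c2 (exp (H Vr Vr)) * fls_const (exp1 aB) * iota (exp1 aT) * ex (OI H Vt Vtb))"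
      using b c3b by simp
  qed (simp_all add: aB_def bB_def aT_def bT_def exp1_nz gnz)
  also have "\<dots> \<longleftrightarrow> - c2 (H Vr (Vtb 0) + H Vs (Vtb 0)) = - inverse g * c2 (H Vr (Vt 0) - H Vs (Vt 0))"
  proof -
    have Q1: "inverse fls_X * (inverse (iota (exp1 bT)) - inverse (iota (exp1 aT))) + fls_X * (c2 (exp (H Vs Vs)) * g * iota (exp1 bT) - c2 (exp (H Vr Vr)) * g * iota (exp1 aT))
       = c2 (H Vr (Vt 0) - H Vs (Vt 0))"
      using arg_cong[OF p1, of iota] unfolding phi1_def g_def by (simp add: c2_def mult_ac)
    have Q2: "inverse (fls_const fls_X) * (fls_const (exp1 bB) - inverse (fls_const (exp1 aB))) + fls_const fls_X * (c2 (exp (H Vs Vs)) * inverse g * inverse (fls_const (exp1 bB)) - c2 (exp (H Vr Vr)) * inverse g * fls_const (exp1 aB))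
       = c2 (H Vr (Vtb 0) + H Vs (Vtb 0))"
      using arg_cong[OF p2, of fls_const] unfolding phi2_def g_def
      by (simp add: c2_def mult_ac fls_const_add fls_const_diff fls_const_inv del: fls_const_mult_const add: fls_const_mult_const[symmetric])
    have L1: "PL = - inverse g * (inverse fls_X * (inverse (iota (exp1 bT)) - inverse (iota (exp1 aT))) + fls_X * (c2 (exp (H Vs Vs)) * g * iota (exp1 bT) - c2 (exp (H Vr Vr)) * g * iota (exp1 aT)))"
      unfolding PL_def inverse_inverse_eq by (rule L1abs[OF gnz])
    have L2: "PM = - (inverse (fls_const fls_X) * (fls_const (exp1 bB) - inverse (fls_const (exp1 aB))) + fls_const fls_X * (c2 (exp (H Vs Vs)) * inverse g * inverse (fls_const (exp1 bB)) - c2 (exp (H Vr Vr)) * inverse g * fls_const (exp1 aB)))"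
      unfolding PM_def by (rule L2abs)
    show ?thesis by (simp only: L1 L2 Q1 Q2)
  qed
  also have "\<dots> \<longleftrightarrow> H Vr (Vtb 0) + H Vs (Vtb 0) = inverse (exp (H Vr Vs)) * (H Vr (Vt 0) - H Vs (Vt 0))"
    unfolding g_def by (simp add: c2_eq_iff flip: c2_inverse c2_mult)
  also have "\<dots> \<longleftrightarrow> dH3c H"
    unfolding dH3c_def by (simp add: exp_minus)
  finally show ?thesis .
qed


lemma pointwise:
  "(dH1a H \<and> dH1b H \<and> dH2a H \<and> dH2b H \<and> dH3a H \<and> dH3b H) \<longleftrightarrow>
   (dH1b H \<and> dH2b H \<and> dH3b H \<and> dH1c H \<and> dH2c H \<and> dH3c H)"
proof -
  have p1: "dH1c H \<longleftrightarrow> phi1 = fls_const (H Vr (Vt 0) - H Vs (Vt 0))" by (simp add: c1c const_iota_eq)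
  have p2: "dH2c H \<longleftrightarrow> phi2 = fls_const (H Vr (Vtb 0) + H Vs (Vtb 0))" by (simp add: c2c const_iota_eq)
  show ?thesis using case1 case2 case3 p1 p2 by blast
qed

end

lemma deriv_along:
  assumes sm: "smooth_F F"
  shows "((\<lambda>x. ipd vs F (q(v := x))) has_real_derivative pd v (ipd vs F) (q(v := x0))) (at x0)"
proof -
  define q0 where "q0 = q(v := x0)"
  have "(\<lambda>h. ipd vs F (q0(v := q0 v + h))) differentiable (at 0)"
    using sm unfolding smooth_F_def by blast
  hence "((\<lambda>h. ipd vs F (q0(v := q0 v + h))) has_real_derivative pd v (ipd vs F) q0) (at 0)"
    unfolding pd_def by (simp add: DERIV_deriv_iff_real_differentiable)
  hence "((\<lambda>h. ipd vs F (q(v := h + x0))) has_real_derivative pd v (ipd vs F) q0) (at 0)"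
    by (simp add: q0_def add.commute)
  hence "((\<lambda>x. ipd vs F (q(v := x))) has_real_derivative pd v (ipd vs F) q0) (at (0 + x0))"
    by (subst DERIV_shift) simp
  thus ?thesis by (simp add: q0_def)
qed

lemma mixed_mvt:
  assumes sm: "smooth_F F" and vw: "v \<noteq> w" and t: "t > 0"
  shows "\<exists>x y. p v < x \<and> x < p v + t \<and> p w < y \<and> y < p w + t \<and>
    F (p(v := p v + t, w := p w + t)) - F (p(v := p v + t)) - F (p(w := p w + t)) + F p
      = t * t * pd w (pd v F) (p(v := x, w := y))"
proof -
  define a b where "a = p v" and "b = p w"
  define psi where "psi x = F (p(w := b + t, v := x)) - F (p(v := x))" for x
  have dpsi: "DERIV psi x :> (pd v F (p(w := b + t, v := x)) - pd v F (p(v := x)))" for x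
    unfolding psi_def using deriv_along[OF sm, of "[]" "p(w := b + t)" v x] deriv_along[OF sm, of "[]" p v x]
    by (auto intro!: derivative_eq_intros)
  obtain x where x: "a < x" "x < a + t" and
    ex: "psi (a + t) - psi a = (a + t - a) * (pd v F (p(w := b + t, v := x)) - pd v F (p(v := x)))"
    using MVT2[of a "a + t" psi "\<lambda>x. pd v F (p(w := b + t, v := x)) - pd v F (p(v := x))"] dpsi t by auto
  define chi where "chi y = pd v F (p(v := x, w := y))" for y
  have dchi: "DERIV chi y :> pd w (pd v F) (p(v := x, w := y))" for y
    unfolding chi_def using deriv_along[OF sm, of "[v]" "p(v := x)" w y] by simp
  obtain y where y: "b < y" "y < b + t" and
    ey: "chi (b + t) - chi b = (b + t - b) * pd w (pd v F) (p(v := x, w := y))"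
    using MVT2[of b "b + t" chi "\<lambda>y. pd w (pd v F) (p(v := x, w := y))"] dchi t by auto
  have e1: "p(w := b + t, v := x) = p(v := x, w := b + t)" using vw by (auto simp: fun_eq_iff)
  have e2: "p(v := x, w := b) = p(v := x)" unfolding b_def using vw by (auto simp: fun_eq_iff)
  have e3: "p(w := b + t, v := a) = p(w := b + t)" unfolding a_def using vw by (auto simp: fun_eq_iff)
  have e4: "p(w := b + t, v := a + t) = p(v := a + t, w := b + t)" using vw by (auto simp: fun_eq_iff)
  have e5: "p(v := a) = p" unfolding a_def by simp
  have "F (p(v := p v + t, w := p w + t)) - F (p(v := p v + t)) - F (p(w := p w + t)) + F p
      = psi (a + t) - psi a"
    unfolding psi_def e3 e4 e5 by (simp add: a_def b_def)
  also have "\<dots> = t * (chi (b + t) - chi b)"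
    using ex unfolding chi_def e1 e2 by simp
  also have "\<dots> = t * t * pd w (pd v F) (p(v := x, w := y))"
    using ey by simp
  finally show ?thesis using x y unfolding a_def b_def by blast
qed


lemma cont_point:
  assumes sm: "smooth_F F" and e: "e > 0"
  shows "\<exists>d>0. \<forall>x y. \<bar>x - p Vr\<bar> < d \<and> \<bar>y - p Vs\<bar> < d \<longrightarrow> \<bar>ipd vs F (p(Vr := x, Vs := y)) - ipd vs F p\<bar> < e"
proof -
  define S where "S = {q. \<forall>v. v \<notin> {Vr, Vs} \<longrightarrow> q v = p v}"
  have cS: "continuous_on S (ipd vs F)" using sm unfolding smooth_F_def S_def by blast
  define gam :: "real \<times> real \<Rightarrow> pt" where "gam z = p(Vr := fst z, Vs := snd z)" for z
  have cg: "continuous_on UNIV gam"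
  proof (rule continuous_on_coordinatewise_then_product)
    fix i
    show "continuous_on UNIV (\<lambda>z. gam z i)"
      unfolding gam_def by (cases "i = Vs"; cases "i = Vr") (auto intro!: continuous_intros)
  qed
  have "gam ` UNIV \<subseteq> S" unfolding gam_def S_def by auto
  hence c: "continuous_on UNIV (\<lambda>z. ipd vs F (gam z))"
    using continuous_on_compose2[OF cS cg] by blast
  then obtain d where d: "d > 0" and
    hd: "\<And>z. dist z (p Vr, p Vs) < d \<Longrightarrow> dist (ipd vs F (gam z)) (ipd vs F (gam (p Vr, p Vs))) < e"
    using e unfolding continuous_on_iff by (metis UNIV_I)
  have gp: "gam (p Vr, p Vs) = p" unfolding gam_def by simp
  show ?thesis
  proof (intro exI[of _ "d/2"] conjI allI impI)
    show "d/2 > 0" using d by simp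
    fix x y assume xy: "\<bar>x - p Vr\<bar> < d / 2 \<and> \<bar>y - p Vs\<bar> < d / 2"
    have "dist (x, y) (p Vr, p Vs) \<le> norm (x - p Vr) + norm (y - p Vs)"
      unfolding dist_norm using norm_Pair_le[of "x - p Vr" "y - p Vs"] by simp
    also have "\<dots> < d" using xy by simp
    finally have "dist (x, y) (p Vr, p Vs) < d" .
    from hd[OF this] show "\<bar>ipd vs F (p(Vr := x, Vs := y)) - ipd vs F p\<bar> < e"
      unfolding gp by (simp add: gam_def dist_real_def)
  qed
qed

lemma schwarz:
  assumes sm: "smooth_F F"
  shows "hess F p Vs Vr = hess F p Vr Vs"
proof (rule ccontr)
  define G1 where "G1 = ipd [Vs, Vr] F"
  define G2 where "G2 = ipd [Vr, Vs] F"
  assume ne: "hess F p Vs Vr \<noteq> hess F p Vr Vs"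
  hence ne': "G1 p \<noteq> G2 p" unfolding hess_def G1_def G2_def by simp
  define e where "e = \<bar>G1 p - G2 p\<bar> / 2"
  have e: "e > 0" using ne' unfolding e_def by simp
  obtain d1 where d1: "d1 > 0" and h1: "\<And>x y. \<bar>x - p Vr\<bar> < d1 \<and> \<bar>y - p Vs\<bar> < d1 \<Longrightarrow> \<bar>G1 (p(Vr := x, Vs := y)) - G1 p\<bar> < e"
    using cont_point[OF sm e, of p "[Vs, Vr]"] unfolding G1_def by blast
  obtain d2 where d2: "d2 > 0" and h2: "\<And>x y. \<bar>x - p Vr\<bar> < d2 \<and> \<bar>y - p Vs\<bar> < d2 \<Longrightarrow> \<bar>G2 (p(Vr := x, Vs := y)) - G2 p\<bar> < e"
    using cont_point[OF sm e, of p "[Vr, Vs]"] unfolding G2_def by blast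
  define t where "t = min d1 d2"
  have t: "t > 0" using d1 d2 unfolding t_def by simp
  obtain x y where xy: "p Vr < x" "x < p Vr + t" "p Vs < y" "y < p Vs + t" and
    E1: "F (p(Vr := p Vr + t, Vs := p Vs + t)) - F (p(Vr := p Vr + t)) - F (p(Vs := p Vs + t)) + F p
      = t * t * pd Vs (pd Vr F) (p(Vr := x, Vs := y))"
    using mixed_mvt[OF sm _ t, of Vr Vs p] by auto
  obtain x' y' where xy': "p Vs < x'" "x' < p Vs + t" "p Vr < y'" "y' < p Vr + t" and
    E2: "F (p(Vs := p Vs + t, Vr := p Vr + t)) - F (p(Vs := p Vs + t)) - F (p(Vr := p Vr + t)) + F p
      = t * t * pd Vr (pd Vs F) (p(Vs := x', Vr := y'))"
    using mixed_mvt[OF sm _ t, of Vs Vr p] by auto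
  have tw: "p(Vs := p Vs + t, Vr := p Vr + t) = p(Vr := p Vr + t, Vs := p Vs + t)"
    "p(Vs := x', Vr := y') = p(Vr := y', Vs := x')" by (auto simp: fun_eq_iff)
  have "t * t * G1 (p(Vr := x, Vs := y)) = t * t * G2 (p(Vr := y', Vs := x'))"
  proof -
    have "t * t * pd Vs (pd Vr F) (p(Vr := x, Vs := y)) = t * t * pd Vr (pd Vs F) (p(Vr := y', Vs := x'))"
      using E1 E2 unfolding tw by linarith
    thus ?thesis unfolding G1_def G2_def by simp
  qed
  hence eq: "G1 (p(Vr := x, Vs := y)) = G2 (p(Vr := y', Vs := x'))" using t by simp
  have a1: "\<bar>G1 (p(Vr := x, Vs := y)) - G1 p\<bar> < e"
    using xy t_def by (intro h1) auto
  have a2: "\<bar>G2 (p(Vr := y', Vs := x')) - G2 p\<bar> < e"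
    using xy' t_def by (intro h2) auto
  have "\<bar>G1 p - G2 p\<bar> < 2 * e" using a1 a2 eq by linarith
  thus False unfolding e_def by simp
qed


theorem corollary4:
  fixes F :: "pt \<Rightarrow> real"
  assumes "smooth_F F"
  shows "(\<forall>p. dH1a (hess F p) \<and> dH1b (hess F p) \<and> dH2a (hess F p) \<and> dH2b (hess F p)
              \<and> dH3a (hess F p) \<and> dH3b (hess F p))
     \<longleftrightarrow> (\<forall>p. dH1b (hess F p) \<and> dH2b (hess F p) \<and> dH3b (hess F p)
              \<and> dH1c (hess F p) \<and> dH2c (hess F p) \<and> dH3c (hess F p))"
proof -
  have "\<And>p. (dH1a (hess F p) \<and> dH1b (hess F p) \<and> dH2a (hess F p) \<and> dH2b (hess F p)
              \<and> dH3a (hess F p) \<and> dH3b (hess F p))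
     \<longleftrightarrow> (dH1b (hess F p) \<and> dH2b (hess F p) \<and> dH3b (hess F p)
              \<and> dH1c (hess F p) \<and> dH2c (hess F p) \<and> dH3c (hess F p))"
    by (rule pointwise) (rule schwarz[OF assms])
  thus ?thesis by blast
qed

end
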